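(* Let $\mathcal S=(\mathcal M,X,\bot)$ be a concurrent system. Then: (i) for every integer $h\ge1$, there is a bijection between executions of $\mathcal S$ of height $h$ (i.e. pairs $(\alpha,x)$ with $\alpha\in X$, $x$ of height $h$, $\alpha\cdot x\ne\bot$) and paths of length $h$ in the DSC; (ii) for every $n\ge1$, there is a bijection between executions of length $n$ and paths of length $n$ in the ADSC leading from a node of the form $(\alpha,c,1)$ to a node of the form $(\beta,d,|d|)$; (iii) for every $n\ge1$ and all states $\alpha,\beta$, there is a bijection between executions of length $n$ leading from $\alpha$ to $\beta$ and paths of length $n$ in the ADSC leading from a node of the form $(\alpha,c,1)$ to a node of the form $(\beta,d,|d|)$.
   Context: A trace monoid $\mathcal M=\mathcal M(\Sigma,I)$ is $\langle\Sigma\mid ab=ba\ ((a,b)\in I)\rangle$, $\Sigma$ finite, $I$ irreflexive symmetric; $|x|$ is length. A clique is a trace of pairwise distinct letters pairwise in $I$; $\mathfrak C$ is the set of nonempty cliques; for $c,c'\in\mathfrak C$, $c\to c'$ means every letter of $c'$ is in relation $(\Sigma\times\Sigma)\setminus I$ with some letter of $c$. Each nonempty trace $x$ has a unique normal form $x=c_1\cdots c_h$ with $c_i\in\mathfrak C$, $c_i\to c_{i+1}$; $h$ is the height of $x$. A concurrent system $(\mathcal M,X,\bot)$: $X$ finite, $\bot\notin X$, right action of $\mathcal M$ on $X\cup\{\bot\}$ with $\bot\cdot x=\bot$; an execution from $\alpha$ is a trace $x$ with $\alpha\cdot x\ne\bot$, leading from $\alpha$ to $\alpha\cdot x$. $\mathfrak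 C_\alpha=\{c\in\mathfrak C:\alpha\cdot c\ne\bot\}$. DSC: digraph with nodes $(\alpha,c)$, $\alpha\in X$, $c\in\mathfrak C_\alpha$, and an arc $(\alpha,c)\to(\beta,d)$ iff $\beta=\alpha\cdot c$ and $c\to d$. ADSC: nodes $(\alpha,c,i)$ with $(\alpha,c)$ a DSC node and $1\le i\le|c|$; arcs $(\alpha,c,i)\to(\alpha,c,i+1)$, and $(\alpha,c,|c|)\to(\beta,d,1)$ whenever $(\alpha,c)\to(\beta,d)$ is a DSC arc. A path of length $p$ is a sequence of $p$ nodes with consecutive nodes joined by arcs. *)

theory Defs
  imports Main
begin

text \<open>Alphabet Sigma = UNIV of a finite type 'a; independence I :: 'a rel.
  Traces are equivalence classes of words under commutation of adjacent
  independent letters.\<close>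

definition swap1 :: "'a rel \<Rightarrow> 'a list \<Rightarrow> 'a list \<Rightarrow> bool" where
  "swap1 I u v \<longleftrightarrow> (\<exists>p q a b. (a, b) \<in> I \<and> u = p @ a # b # q \<and> v = p @ b # a # q)"

definition teq :: "'a rel \<Rightarrow> 'a list \<Rightarrow> 'a list \<Rightarrow> bool" where
  "teq I = equivclp (swap1 I)"

definition tclass :: "'a rel \<Rightarrow> 'a list \<Rightarrow> 'a list set" where
  "tclass I w = {v. teq I w v}"

definition traces :: "'a rel \<Rightarrow> 'a list set set" where
  "traces I = range (tclass I)"

definition tconcat :: "'a rel \<Rightarrow> 'a list set list \<Rightarrow> 'a list set" where
  "tconcat I xs = tclass I (concat (map (\<lambda>x. SOME w. w \<in> x) xs))"

definition tlength :: "'a list set \<Rightarrow> nat" where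
  "tlength x = length (SOME w. w \<in> x)"

definition indep_alphabet :: "'a rel \<Rightarrow> bool" where
  "indep_alphabet I \<longleftrightarrow> irrefl I \<and> sym I"

text \<open>A clique is determined by its (finite) set of pairwise distinct, pairwise
  independent letters; we represent a clique by that set.\<close>

definition is_clique :: "'a rel \<Rightarrow> 'a set \<Rightarrow> bool" where
  "is_clique I c \<longleftrightarrow> finite c \<and> c \<noteq> {} \<and> (\<forall>a\<in>c. \<forall>b\<in>c. a \<noteq> b \<longrightarrow> (a, b) \<in> I)"

definition ctrace :: "'a rel \<Rightarrow> 'a set \<Rightarrow> 'a list set" where
  "ctrace I c = tclass I (SOME w. distinct w \<and> set w = c)"

definition clique_arrow :: "'a rel \<Rightarrow> 'a set \<Rightarrow> 'a set \<Rightarrow> bool" where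
  "clique_arrow I c c' \<longleftrightarrow> (\<forall>b\<in>c'. \<exists>a\<in>c. (a, b) \<notin> I)"

definition normal_form :: "'a rel \<Rightarrow> 'a list set \<Rightarrow> 'a set list \<Rightarrow> bool" where
  "normal_form I x cs \<longleftrightarrow> (\<forall>c\<in>set cs. is_clique I c)
     \<and> (\<forall>i. Suc i < length cs \<longrightarrow> clique_arrow I (cs ! i) (cs ! Suc i))
     \<and> x = tconcat I (map (ctrace I) cs)"

definition height :: "'a rel \<Rightarrow> 'a list set \<Rightarrow> nat" where
  "height I x = length (THE cs. normal_form I x cs)"

text \<open>States are the (finite) type 's; the sink state \<bottom> is None.  The right
  action of M on X \<union> {\<bottom>} is given by its generators, the letter action
  delta, extended to words; it is an action of the trace monoid iff it
  respects the defining relations ab = ba for (a,b) \<in> I.\<close>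

fun run :: "('a \<Rightarrow> 's \<Rightarrow> 's option) \<Rightarrow> 's \<Rightarrow> 'a list \<Rightarrow> 's option" where
  "run \<delta> \<alpha> [] = Some \<alpha>"
| "run \<delta> \<alpha> (a # w) = (case \<delta> a \<alpha> of None \<Rightarrow> None | Some \<beta> \<Rightarrow> run \<delta> \<beta> w)"

definition concurrent_system :: "'a rel \<Rightarrow> ('a \<Rightarrow> 's \<Rightarrow> 's option) \<Rightarrow> bool" where
  "concurrent_system I \<delta> \<longleftrightarrow> indep_alphabet I \<and>
     (\<forall>a b \<alpha>. (a, b) \<in> I \<longrightarrow> run \<delta> \<alpha> [a, b] = run \<delta> \<alpha> [b, a])"

definition tact :: "('a \<Rightarrow> 's \<Rightarrow> 's option) \<Rightarrow> 's \<Rightarrow> 'a list set \<Rightarrow> 's option" where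
  "tact \<delta> \<alpha> x = run \<delta> \<alpha> (SOME w. w \<in> x)"

definition cact :: "'a rel \<Rightarrow> ('a \<Rightarrow> 's \<Rightarrow> 's option) \<Rightarrow> 's \<Rightarrow> 'a set \<Rightarrow> 's option" where
  "cact I \<delta> \<alpha> c = tact \<delta> \<alpha> (ctrace I c)"

definition executions :: "'a rel \<Rightarrow> ('a \<Rightarrow> 's \<Rightarrow> 's option) \<Rightarrow> ('s \<times> 'a list set) set" where
  "executions I \<delta> = {(\<alpha>, x). x \<in> traces I \<and> tact \<delta> \<alpha> x \<noteq> None}"

definition executions_height :: "'a rel \<Rightarrow> ('a \<Rightarrow> 's \<Rightarrow> 's option) \<Rightarrow> nat \<Rightarrow> ('s \<times> 'a list set) set" where
  "executions_height I \<delta> h = {(\<alpha>, x) \<in> executions I \<delta>. height I x = h}"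

definition executions_length :: "'a rel \<Rightarrow> ('a \<Rightarrow> 's \<Rightarrow> 's option) \<Rightarrow> nat \<Rightarrow> ('s \<times> 'a list set) set" where
  "executions_length I \<delta> n = {(\<alpha>, x) \<in> executions I \<delta>. tlength x = n}"

definition executions_from_to :: "'a rel \<Rightarrow> ('a \<Rightarrow> 's \<Rightarrow> 's option) \<Rightarrow> nat \<Rightarrow> 's \<Rightarrow> 's \<Rightarrow> 'a list set set" where
  "executions_from_to I \<delta> n \<alpha> \<beta> = {x \<in> traces I. tlength x = n \<and> tact \<delta> \<alpha> x = Some \<beta>}"

definition dsc_node :: "'a rel \<Rightarrow> ('a \<Rightarrow> 's \<Rightarrow> 's option) \<Rightarrow> 's \<times> 'a set \<Rightarrow> bool" where
  "dsc_node I \<delta> v \<longleftrightarrow> (case v of (\<alpha>, c) \<Rightarrow> is_clique I c \<and> cact I \<delta> \<alpha> c \<noteq> None)"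

definition dsc_arc :: "'a rel \<Rightarrow> ('a \<Rightarrow> 's \<Rightarrow> 's option) \<Rightarrow> 's \<times> 'a set \<Rightarrow> 's \<times> 'a set \<Rightarrow> bool" where
  "dsc_arc I \<delta> v w \<longleftrightarrow> dsc_node I \<delta> v \<and> dsc_node I \<delta> w \<and>
     (case v of (\<alpha>, c) \<Rightarrow> case w of (\<beta>, d) \<Rightarrow> cact I \<delta> \<alpha> c = Some \<beta> \<and> clique_arrow I c d)"

definition adsc_node :: "'a rel \<Rightarrow> ('a \<Rightarrow> 's \<Rightarrow> 's option) \<Rightarrow> 's \<times> 'a set \<times> nat \<Rightarrow> bool" where
  "adsc_node I \<delta> v \<longleftrightarrow> (case v of (\<alpha>, c, i) \<Rightarrow> dsc_node I \<delta> (\<alpha>, c) \<and> 1 \<le> i \<and> i \<le> card c)"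

definition adsc_arc :: "'a rel \<Rightarrow> ('a \<Rightarrow> 's \<Rightarrow> 's option) \<Rightarrow> 's \<times> 'a set \<times> nat \<Rightarrow> 's \<times> 'a set \<times> nat \<Rightarrow> bool" where
  "adsc_arc I \<delta> v w \<longleftrightarrow> adsc_node I \<delta> v \<and> adsc_node I \<delta> w \<and>
     (case v of (\<alpha>, c, i) \<Rightarrow> case w of (\<beta>, d, j) \<Rightarrow>
        (\<beta> = \<alpha> \<and> d = c \<and> j = Suc i)
      \<or> (i = card c \<and> j = 1 \<and> dsc_arc I \<delta> (\<alpha>, c) (\<beta>, d)))"

definition paths :: "('v \<Rightarrow> bool) \<Rightarrow> ('v \<Rightarrow> 'v \<Rightarrow> bool) \<Rightarrow> nat \<Rightarrow> 'v list set" where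
  "paths node arc p = {vs. length vs = p \<and> (\<forall>v\<in>set vs. node v)
      \<and> (\<forall>i. Suc i < p \<longrightarrow> arc (vs ! i) (vs ! Suc i))}"

definition dsc_paths :: "'a rel \<Rightarrow> ('a \<Rightarrow> 's \<Rightarrow> 's option) \<Rightarrow> nat \<Rightarrow> ('s \<times> 'a set) list set" where
  "dsc_paths I \<delta> p = paths (dsc_node I \<delta>) (dsc_arc I \<delta>) p"

definition adsc_full_paths :: "'a rel \<Rightarrow> ('a \<Rightarrow> 's \<Rightarrow> 's option) \<Rightarrow> nat \<Rightarrow> ('s \<times> 'a set \<times> nat) list set" where
  "adsc_full_paths I \<delta> n = {vs \<in> paths (adsc_node I \<delta>) (adsc_arc I \<delta>) n.
      vs \<noteq> [] \<and> snd (snd (hd vs)) = 1 \<and> snd (snd (last vs)) = card (fst (snd (last vs)))}"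

text \<open>Those starting at state alpha whose execution ends in state beta,
  i.e. the last node (gamma,d,|d|) satisfies gamma \<cdot> d = beta.\<close>
definition adsc_full_paths_from_to :: "'a rel \<Rightarrow> ('a \<Rightarrow> 's \<Rightarrow> 's option) \<Rightarrow> nat \<Rightarrow> 's \<Rightarrow> 's \<Rightarrow> ('s \<times> 'a set \<times> nat) list set" where
  "adsc_full_paths_from_to I \<delta> n \<alpha> \<beta> = {vs \<in> adsc_full_paths I \<delta> n.
      fst (hd vs) = \<alpha> \<and> cact I \<delta> (fst (last vs)) (fst (snd (last vs))) = Some \<beta>}"

end

theory Submission
  imports Defs
begin


lemma teq_refl[simp]: "teq I u u"
  by (simp add: teq_def equivclp_def)
lemma teq_sym: "teq I u v \<Longrightarrow> teq I v u"
  unfolding teq_def by (rule equivclp_sym)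
lemma teq_trans: "teq I u v \<Longrightarrow> teq I v w \<Longrightarrow> teq I u w"
  unfolding teq_def by (meson transpD transp_equivclp)
lemma swap_teq: "swap1 I u v \<Longrightarrow> teq I u v"
  unfolding teq_def equivclp_def by (simp add: r_into_rtranclp symclpI)

lemma teq_map:
  assumes "\<And>u v. swap1 I u v \<Longrightarrow> teq J (h u) (h v)" and "teq I u v"
  shows "teq J (h u) (h v)"
  using assms(2) unfolding teq_def[of I]
proof (induction rule: equivclp_induct)
  case base then show ?case by simp
next
  case (step y z)
  then show ?case using assms(1) teq_sym teq_trans by metis
qed

lemma teq_inv:
  assumes "\<And>u v. swap1 I u v \<Longrightarrow> f u = f v" and "teq I u v"
  shows "f u = f v"
  using assms(2) unfolding teq_def[of I]
proof (induction rule: equivclp_induct)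
  case base then show ?case by simp
next
  case (step y z)
  then show ?case using assms(1) by metis
qed

lemma swap_cong: "swap1 I u v \<Longrightarrow> swap1 I (p @ u @ q) (p @ v @ q)"
  unfolding swap1_def by (metis append.assoc append_Cons)

lemma teq_cong1: "teq I u v \<Longrightarrow> teq I (p @ u @ q) (p @ v @ q)"
  by (rule teq_map[where h="\<lambda>u. p @ u @ q"]) (auto intro: swap_teq swap_cong)

lemma teq_app: "teq I u u' \<Longrightarrow> teq I v v' \<Longrightarrow> teq I (u @ v) (u' @ v')"
  using teq_cong1[of I u u' "[]" v] teq_cong1[of I v v' u' "[]"] teq_trans by fastforce

lemma teq_Cons: "teq I v v' \<Longrightarrow> teq I (a # v) (a # v')"
  using teq_app[of I "[a]" "[a]" v v'] by simp

lemma swap_length: "swap1 I u v \<Longrightarrow> length u = length v"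
  unfolding swap1_def by auto
lemma teq_length: "teq I u v \<Longrightarrow> length u = length v"
  by (rule teq_inv[where f=length]) (auto dest: swap_length)

lemma swap_remove1: "swap1 I u v \<Longrightarrow> irrefl I \<Longrightarrow> teq I (remove1 a u) (remove1 a v)"
proof -
  assume s: "swap1 I u v" and ir: "irrefl I"
  then obtain p q x y where xy: "(x,y) \<in> I" "u = p @ x # y # q" "v = p @ y # x # q"
    unfolding swap1_def by blast
  have "x \<noteq> y" using xy(1) ir by (auto simp: irrefl_def)
  show ?thesis
  proof (cases "a \<in> set p")
    case True
    have "swap1 I (remove1 a p @ x # y # q) (remove1 a p @ y # x # q)"
      unfolding swap1_def using xy(1) by blast
    then show ?thesis using xy True by (simp add: remove1_append swap_teq)
  next
    case False
    have "swap1 I (p @ x # y # remove1 a q) (p @ y # x # remove1 a q)"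
      unfolding swap1_def using xy(1) by blast
    then show ?thesis using xy \<open>x \<noteq> y\<close> False
      by (auto simp: remove1_append intro!: swap_teq)
  qed
qed

lemma teq_remove1: "irrefl I \<Longrightarrow> teq I u v \<Longrightarrow> teq I (remove1 a u) (remove1 a v)"
  by (rule teq_map[where h="remove1 a"]) (auto intro: swap_remove1)

lemma teq_cancel: "irrefl I \<Longrightarrow> teq I (u @ v) (u @ v') \<Longrightarrow> teq I v v'"
proof (induction u)
  case Nil then show ?case by simp
next
  case (Cons a u)
  then show ?case using teq_remove1[OF Cons(2) Cons(3), of a] by simp
qed

lemma tclass_eq: "tclass I u = tclass I v \<longleftrightarrow> teq I u v"
  unfolding tclass_def by (auto dest: teq_sym teq_trans)

lemma in_tclass: "w \<in> tclass I u \<longleftrightarrow> teq I u w"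
  by (simp add: tclass_def)

lemma some_tclass: "teq I u (SOME w. w \<in> tclass I u)"
  by (metis in_tclass someI_ex teq_refl)

lemma tlength_tclass: "tlength (tclass I u) = length u"
  unfolding tlength_def using some_tclass teq_length by metis


definition minp :: "'a rel \<Rightarrow> 'a \<Rightarrow> 'a list \<Rightarrow> bool" where
  "minp I a w \<longleftrightarrow> a \<in> set w \<and> (\<forall>b\<in>set (takeWhile (\<lambda>x. x \<noteq> a) w). (b, a) \<in> I)"

lemma takeWhile_ne_app: "a \<notin> set p \<Longrightarrow> takeWhile (\<lambda>x. x \<noteq> a) (p @ r) = p @ takeWhile (\<lambda>x. x \<noteq> a) r"
  by (induction p) auto

lemma swap_minp:
  assumes "swap1 I u v" "indep_alphabet I"
  shows "minp I a u = minp I a v"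
proof -
  obtain p q x y where xy: "(x,y) \<in> I" "u = p @ x # y # q" "v = p @ y # x # q"
    using assms(1) unfolding swap1_def by blast
  have ir: "irrefl I" and sy: "sym I" using assms(2) by (auto simp: indep_alphabet_def)
  have "x \<noteq> y" using xy(1) ir by (auto simp: irrefl_def)
  have yx: "(y,x) \<in> I" using xy(1) sy by (auto simp: sym_def)
  show ?thesis
  proof (cases "a \<in> set p")
    case True
    then show ?thesis using xy by (simp add: minp_def takeWhile_append1)
  next
    case False
    then show ?thesis using xy \<open>x \<noteq> y\<close> yx
      by (auto simp add: minp_def takeWhile_ne_app)
  qed
qed

lemma teq_minp: "indep_alphabet I \<Longrightarrow> teq I u v \<Longrightarrow> minp I a u = minp I a v"
  by (rule teq_inv[where f="minp I a"]) (simp_all add: swap_minp)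

lemma minp_Cons_self: "minp I a (a # v)"
  by (simp add: minp_def)

lemma minp_Cons: "minp I b (a # v) \<Longrightarrow> a \<noteq> b \<Longrightarrow> minp I b v"
  by (auto simp: minp_def)

lemma minp_Cons_indep: "minp I b (a # v) \<Longrightarrow> a \<noteq> b \<Longrightarrow> (a, b) \<in> I"
  by (auto simp: minp_def)

lemma teq_move_front: "(\<forall>b\<in>set u. (b,a) \<in> I) \<Longrightarrow> teq I (u @ a # r) (a # u @ r)"
proof (induction u)
  case Nil then show ?case by simp
next
  case (Cons b u)
  then have "teq I (b # u @ a # r) (b # a # u @ r)" by (simp add: teq_Cons)
  moreover have "swap1 I (b # a # u @ r) (a # b # u @ r)"
    unfolding swap1_def using Cons(2) by (metis append_Nil list.set_intros(1))
  ultimately show ?case using swap_teq teq_trans by fastforce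
qed

lemma minp_teq_front: "minp I a w \<Longrightarrow> \<exists>v. teq I w (a # v)"
proof -
  assume m: "minp I a w"
  let ?u = "takeWhile (\<lambda>x. x \<noteq> a) w"
  have "w = ?u @ a # tl (dropWhile (\<lambda>x. x \<noteq> a) w)"
    using m unfolding minp_def
    by (metis (mono_tags, lifting) dropWhile_eq_Nil_conv hd_dropWhile list.collapse takeWhile_dropWhile_id)
  then have "teq I w (a # ?u @ tl (dropWhile (\<lambda>x. x \<noteq> a) w))"
    using teq_move_front m unfolding minp_def by metis
  then show ?thesis by blast
qed

lemma minp_iff: "indep_alphabet I \<Longrightarrow> minp I a w \<longleftrightarrow> (\<exists>v. teq I w (a # v))"
  using minp_teq_front teq_minp minp_Cons_self by metis

lemma minp_indep: "indep_alphabet I \<Longrightarrow> minp I a w \<Longrightarrow> minp I b w \<Longrightarrow> a \<noteq> b \<Longrightarrow> (a,b) \<in> I"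
  by (metis minp_Cons_indep minp_teq_front teq_minp)

lemma pull_out:
  assumes "indep_alphabet I"
  shows "distinct ds \<Longrightarrow> \<forall>d\<in>set ds. minp I d w \<Longrightarrow> \<exists>v. teq I w (ds @ v)"
proof (induction ds arbitrary: w)
  case Nil then show ?case by (intro exI[of _ w]) simp
next
  case (Cons d ds)
  then obtain v0 where v0: "teq I w (d # v0)" using minp_teq_front by fastforce
  have "\<forall>e\<in>set ds. minp I e v0"
    using Cons(2,3) v0 teq_minp[OF assms] minp_Cons by (metis distinct.simps(2) list.set_intros(2))
  then obtain v where "teq I v0 (ds @ v)" using Cons.IH Cons.prems(1) by auto
  then show ?case using v0 teq_Cons teq_trans by fastforce
qed


definition cw :: "'a set \<Rightarrow> 'a list" where
  "cw c = (SOME w. distinct w \<and> set w = c)"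

definition W :: "'a set list \<Rightarrow> 'a list" where
  "W cs = concat (map cw cs)"

definition chainc :: "'a rel \<Rightarrow> 'a set list \<Rightarrow> bool" where
  "chainc I cs \<longleftrightarrow> (\<forall>i. Suc i < length cs \<longrightarrow> clique_arrow I (cs ! i) (cs ! Suc i))"

definition cliques :: "'a rel \<Rightarrow> 'a set list \<Rightarrow> bool" where
  "cliques I cs \<longleftrightarrow> (\<forall>c\<in>set cs. is_clique I c)"

lemma W_Nil[simp]: "W [] = []" by (simp add: W_def)
lemma W_Cons[simp]: "W (c # cs) = cw c @ W cs" by (simp add: W_def)

lemma cw_props: "finite c \<Longrightarrow> distinct (cw c) \<and> set (cw c) = c"
  unfolding cw_def by (rule someI_ex) (metis finite_distinct_list)

lemma cw_length: "finite c \<Longrightarrow> length (cw c) = card c"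
  using cw_props distinct_card by fastforce

lemma clique_card: "is_clique I c \<Longrightarrow> card c \<ge> 1"
  unfolding is_clique_def by (simp add: Suc_leI card_gt_0_iff)

lemma chainc_Cons: "chainc I (c # cs) \<longleftrightarrow> (cs \<noteq> [] \<longrightarrow> clique_arrow I c (hd cs)) \<and> chainc I cs"
  unfolding chainc_def
  apply (cases cs)
   apply simp
  apply (auto simp: nth_Cons split: nat.splits)
  done

lemma chainc_Nil[simp]: "chainc I []" by (simp add: chainc_def)
lemma cliques_Cons[simp]: "cliques I (c # cs) \<longleftrightarrow> is_clique I c \<and> cliques I cs"
  by (simp add: cliques_def)
lemma cliques_Nil[simp]: "cliques I []" by (simp add: cliques_def)

lemma W_length: "cliques I cs \<Longrightarrow> length (W cs) = sum_list (map card cs)"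
  by (induction cs) (auto simp: cw_length is_clique_def)

lemma W_empty: "cliques I cs \<Longrightarrow> W cs = [] \<longleftrightarrow> cs = []"
  by (induction cs) (auto dest!: cw_props simp: is_clique_def)

lemma notmin:
  "cliques I cs \<Longrightarrow> chainc I cs \<Longrightarrow> cs \<noteq> [] \<Longrightarrow> a \<in> set (W cs) \<Longrightarrow> a \<notin> hd cs
    \<Longrightarrow> \<exists>b\<in>set (takeWhile (\<lambda>x. x \<noteq> a) (W cs)). (b, a) \<notin> I"
proof (induction cs)
  case Nil then show ?case by simp
next
  case (Cons c cs)
  have fc: "finite c" using Cons(2) by (simp add: is_clique_def)
  have ac: "a \<notin> set (cw c)" using Cons(6) cw_props[OF fc] by simp
  then have tw: "takeWhile (\<lambda>x. x \<noteq> a) (W (c # cs)) = cw c @ takeWhile (\<lambda>x. x \<noteq> a) (W cs)"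
    by (simp add: takeWhile_ne_app)
  have csne: "cs \<noteq> []" using Cons(5) ac by auto
  then obtain d cs' where cs: "cs = d # cs'" by (cases cs) auto
  show ?case
  proof (cases "a \<in> d")
    case True
    have "clique_arrow I c d" using Cons(3) cs by (simp add: chainc_Cons)
    then obtain b where "b \<in> c" "(b, a) \<notin> I" using True unfolding clique_arrow_def by blast
    then show ?thesis using tw cw_props[OF fc] by auto
  next
    case False
    have "\<exists>b\<in>set (takeWhile (\<lambda>x. x \<noteq> a) (W cs)). (b, a) \<notin> I"
      using Cons.IH Cons.prems csne ac cs False by (simp add: chainc_Cons)
    then show ?thesis using tw by auto
  qed
qed

lemma nf_hd:
  assumes "indep_alphabet I" "cliques I (c # cs)" "chainc I (c # cs)"
  shows "minp I a (W (c # cs)) \<longleftrightarrow> a \<in> c"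
proof
  assume m: "minp I a (W (c # cs))"
  show "a \<in> c"
  proof (rule ccontr)
    assume "a \<notin> c"
    moreover have "a \<in> set (W (c # cs))" using m by (simp add: minp_def)
    ultimately show False using notmin[OF assms(2,3), of a] m by (auto simp: minp_def)
  qed
next
  assume a: "a \<in> c"
  have fc: "finite c" using assms(2) by (simp add: is_clique_def)
  have ac: "a \<in> set (cw c)" using a cw_props[OF fc] by simp
  have tw: "takeWhile (\<lambda>x. x \<noteq> a) (W (c # cs)) = takeWhile (\<lambda>x. x \<noteq> a) (cw c)"
    using ac by (simp add: takeWhile_append1)
  have "\<forall>b\<in>set (takeWhile (\<lambda>x. x \<noteq> a) (cw c)). (b, a) \<in> I"
  proof
    fix b assume b: "b \<in> set (takeWhile (\<lambda>x. x \<noteq> a) (cw c))"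
    then have "b \<in> c" "b \<noteq> a" using cw_props[OF fc]
      by (auto dest: set_takeWhileD)
    then show "(b, a) \<in> I" using assms(2) a by (auto simp: is_clique_def)
  qed
  then show "minp I a (W (c # cs))" using tw ac by (simp add: minp_def)
qed

lemma nf_unique:
  assumes ind: "indep_alphabet I"
  shows "cliques I cs \<Longrightarrow> chainc I cs \<Longrightarrow> cliques I ds \<Longrightarrow> chainc I ds \<Longrightarrow> teq I (W cs) (W ds) \<Longrightarrow> cs = ds"
proof (induction cs arbitrary: ds)
  case Nil
  then have "length (W ds) = 0" using teq_length by fastforce
  then show ?case using W_empty[OF Nil(3)] by simp
next
  case (Cons c cs)
  have "length (W ds) \<noteq> 0" using teq_length[OF Cons(6)] W_empty[OF Cons(2)] by auto
  then obtain d ds' where ds: "ds = d # ds'" by (cases ds) auto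
  have "a \<in> c \<longleftrightarrow> a \<in> d" for a
  proof -
    have "a \<in> c \<longleftrightarrow> minp I a (W (c # cs))" using nf_hd[OF ind Cons(2,3)] by simp
    also have "\<dots> \<longleftrightarrow> minp I a (W (d # ds'))" using teq_minp[OF ind Cons(6)] ds by simp
    also have "\<dots> \<longleftrightarrow> a \<in> d" using nf_hd[OF ind, of d ds'] Cons(4,5) ds by simp
    finally show ?thesis .
  qed
  then have cd: "c = d" by blast
  have ir: "irrefl I" using ind by (simp add: indep_alphabet_def)
  have "teq I (W cs) (W ds')" using teq_cancel[OF ir] Cons(6) ds cd by simp
  then have "cs = ds'" using Cons ds by (simp add: chainc_Cons)
  then show ?case using ds cd by simp
qed

lemma nf_exists:
  assumes ind: "indep_alphabet I"
  shows "\<exists>cs. cliques I cs \<and> chainc I cs \<and> teq I w (W cs)"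
proof (induction "length w" arbitrary: w rule: less_induct)
  case less
  show ?case
  proof (cases "w = []")
    case True then show ?thesis by (intro exI[of _ "[]"]) simp
  next
    case False
    define M where "M = {a. minp I a w}"
    have fM: "finite M" unfolding M_def minp_def by (rule finite_subset[of _ "set w"]) auto
    have "minp I (hd w) w" using False by (cases w) (auto simp: minp_def)
    then have Mne: "M \<noteq> {}" unfolding M_def by blast
    have "\<forall>a\<in>M. \<forall>b\<in>M. a \<noteq> b \<longrightarrow> (a,b)\<in>I" unfolding M_def using minp_indep[OF ind] by blast
    then have clM: "is_clique I M" unfolding is_clique_def using fM Mne by blast
    have "\<forall>d\<in>set (cw M). minp I d w" using cw_props[OF fM] unfolding M_def by simp
    then obtain v where v: "teq I w (cw M @ v)"
      using pull_out[OF ind, of "cw M" w] cw_props[OF fM] by blast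
    have "length (cw M) \<ge> 1" using cw_length[OF fM] clique_card[OF clM] by simp
    then have "length v < length w" using teq_length[OF v] by (simp del: length_greater_0_conv)
    then obtain cs where cs: "cliques I cs" "chainc I cs" "teq I v (W cs)" using less by blast
    have arr: "clique_arrow I M (hd cs)" if ne: "cs \<noteq> []"
      unfolding clique_arrow_def
    proof
      fix b assume b: "b \<in> hd cs"
      show "\<exists>a\<in>M. (a, b) \<notin> I"
      proof (rule ccontr)
        assume "\<not> (\<exists>a\<in>M. (a, b) \<notin> I)"
        then have allInd: "\<forall>a\<in>M. (a, b) \<in> I" by blast
        have bM: "b \<notin> M" using allInd ind unfolding indep_alphabet_def irrefl_def by blast
        obtain d cs' where dcs: "cs = d # cs'" using ne by (cases cs) auto
        have "minp I b (W cs)" using nf_hd[OF ind, of d cs' b] cs b dcs by simp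
        then have mv: "minp I b v" using teq_minp[OF ind cs(3)] by simp
        have bn: "b \<notin> set (cw M)" using bM cw_props[OF fM] by simp
        have "minp I b (cw M @ v)" using mv bn allInd cw_props[OF fM]
          by (auto simp: minp_def takeWhile_ne_app)
        then have "minp I b w" using teq_minp[OF ind v] by simp
        then show False using bM M_def by simp
      qed
    qed
    have "teq I (cw M @ v) (cw M @ W cs)" using cs(3) teq_app[OF teq_refl] by blast
    then have "teq I w (W (M # cs))" using teq_trans[OF v] by simp
    moreover have "cliques I (M # cs)" using clM cs by simp
    moreover have "chainc I (M # cs)" using cs arr by (simp add: chainc_Cons)
    ultimately show ?thesis by blast
  qed
qed


lemma ctrace_cw: "ctrace I c = tclass I (cw c)"
  by (simp add: ctrace_def cw_def)

lemma tconcat_W: "tconcat I (map (ctrace I) cs) = tclass I (W cs)"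
proof -
  have "teq I (W cs) (concat (map (\<lambda>x. SOME w. w \<in> x) (map (ctrace I) cs)))"
  proof (induction cs)
    case Nil then show ?case by simp
  next
    case (Cons c cs)
    have "teq I (cw c) (SOME w. w \<in> tclass I (cw c))" by (rule some_tclass)
    then show ?case using teq_app Cons by (simp add: ctrace_cw)
  qed
  then show ?thesis unfolding tconcat_def using tclass_eq teq_sym by metis
qed

lemma nf_iff: "normal_form I (tclass I w) cs \<longleftrightarrow> cliques I cs \<and> chainc I cs \<and> teq I w (W cs)"
  unfolding normal_form_def tconcat_W tclass_eq cliques_def chainc_def by blast

lemma height_eq:
  assumes "indep_alphabet I" "cliques I cs" "chainc I cs" "teq I w (W cs)"
  shows "height I (tclass I w) = length cs"
proof -
  have "(THE cs. normal_form I (tclass I w) cs) = cs"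
  proof (rule the_equality)
    show "normal_form I (tclass I w) cs" using assms nf_iff by blast
  next
    fix ds assume "normal_form I (tclass I w) ds"
    then have "cliques I ds" "chainc I ds" "teq I w (W ds)" using nf_iff by blast+
    then show "ds = cs" using nf_unique[OF assms(1)] assms(2,3,4) teq_sym teq_trans by metis
  qed
  then show ?thesis by (simp add: height_def)
qed

lemma run_append: "run \<delta> \<alpha> (u @ v) = (case run \<delta> \<alpha> u of None \<Rightarrow> None | Some \<beta> \<Rightarrow> run \<delta> \<beta> v)"
  by (induction u arbitrary: \<alpha>) (auto split: option.splits)

lemma swap_run:
  assumes "concurrent_system I \<delta>" "swap1 I u v"
  shows "run \<delta> \<alpha> u = run \<delta> \<alpha> v"
proof -
  obtain p q x y where xy: "(x,y) \<in> I" "u = p @ x # y # q" "v = p @ y # x # q"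
    using assms(2) unfolding swap1_def by blast
  have e: "run \<delta> \<beta> [x, y] = run \<delta> \<beta> [y, x]" for \<beta>
    using assms(1) xy(1) by (simp add: concurrent_system_def)
  have "run \<delta> \<beta> ([x, y] @ q) = run \<delta> \<beta> ([y, x] @ q)" for \<beta>
    by (simp only: run_append e)
  then show ?thesis using xy by (simp add: run_append del: run.simps split: option.split)
qed

lemma teq_run: "concurrent_system I \<delta> \<Longrightarrow> teq I u v \<Longrightarrow> run \<delta> \<alpha> u = run \<delta> \<alpha> v"
  by (rule teq_inv[where f="run \<delta> \<alpha>"]) (simp_all add: swap_run)

lemma tact_tclass: "concurrent_system I \<delta> \<Longrightarrow> tact \<delta> \<alpha> (tclass I w) = run \<delta> \<alpha> w"
  unfolding tact_def using some_tclass teq_run by metis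

lemma cact_cw: "concurrent_system I \<delta> \<Longrightarrow> cact I \<delta> \<alpha> c = run \<delta> \<alpha> (cw c)"
  by (simp add: cact_def ctrace_cw tact_tclass)


fun chainp :: "('v \<Rightarrow> bool) \<Rightarrow> ('v \<Rightarrow> 'v \<Rightarrow> bool) \<Rightarrow> 'v list \<Rightarrow> bool" where
  "chainp node arc [] = True"
| "chainp node arc [v] = node v"
| "chainp node arc (v # w # vs) = (node v \<and> arc v w \<and> chainp node arc (w # vs))"

lemma chainp_Cons: "chainp node arc (v # vs) \<longleftrightarrow> node v \<and> chainp node arc vs \<and> (vs \<noteq> [] \<longrightarrow> arc v (hd vs))"
  by (cases vs) auto

lemma all_nat_split: "(\<forall>i::nat. P i) \<longleftrightarrow> P 0 \<and> (\<forall>i. P (Suc i))"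
  by (metis not0_implies_Suc)

lemma chainp_iff: "chainp node arc vs \<longleftrightarrow> (\<forall>v\<in>set vs. node v) \<and> (\<forall>i. Suc i < length vs \<longrightarrow> arc (vs ! i) (vs ! Suc i))"
proof (induction vs)
  case Nil then show ?case by simp
next
  case (Cons v vs)
  show ?case
  proof (cases vs)
    case Nil then show ?thesis by simp
  next
    case (Cons w ws)
    have "(\<forall>i. Suc i < length (v # vs) \<longrightarrow> arc ((v # vs) ! i) ((v # vs) ! Suc i))
      \<longleftrightarrow> arc v w \<and> (\<forall>i. Suc i < length vs \<longrightarrow> arc (vs ! i) (vs ! Suc i))"
      by (subst all_nat_split) (simp add: Cons)
    then show ?thesis using Cons \<open>chainp node arc vs = _\<close> by (auto simp: chainp_Cons)
  qed
qed

lemma paths_iff: "vs \<in> paths node arc n \<longleftrightarrow> length vs = n \<and> chainp node arc vs"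
  unfolding paths_def chainp_iff by auto

lemma chainp_append: "chainp node arc (xs @ ys) \<longleftrightarrow>
   chainp node arc xs \<and> chainp node arc ys \<and> (xs \<noteq> [] \<longrightarrow> ys \<noteq> [] \<longrightarrow> arc (last xs) (hd ys))"
  by (induction xs) (auto simp: chainp_Cons)

context
  fixes I :: "'a rel" and \<delta> :: "'a \<Rightarrow> 's \<Rightarrow> 's option"
  assumes cs: "concurrent_system I \<delta>"
begin

lemma ind: "indep_alphabet I" using cs by (simp add: concurrent_system_def)

lemma g_props:
  "chainp (dsc_node I \<delta>) (dsc_arc I \<delta>) vs \<Longrightarrow> vs \<noteq> [] \<Longrightarrow>
    cliques I (map snd vs) \<and> chainc I (map snd vs) \<and>
    run \<delta> (fst (hd vs)) (W (map snd vs)) = cact I \<delta> (fst (last vs)) (snd (last vs)) \<and>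
    cact I \<delta> (fst (last vs)) (snd (last vs)) \<noteq> None"
proof (induction vs)
  case Nil then show ?case by simp
next
  case (Cons v vs)
  obtain \<alpha> c where v: "v = (\<alpha>, c)" by (cases v)
  have nv: "is_clique I c" "cact I \<delta> \<alpha> c \<noteq> None" using Cons(2) v by (auto simp: chainp_Cons dsc_node_def)
  show ?case
  proof (cases "vs = []")
    case True
    then show ?thesis using nv v by (simp add: cact_cw[OF cs] chainc_Cons)
  next
    case False
    obtain \<beta> d vs' where vs: "vs = (\<beta>, d) # vs'" using False by (metis list.exhaust surj_pair)
    have arc: "cact I \<delta> \<alpha> c = Some \<beta>" "clique_arrow I c d"
      using Cons(2) v vs by (auto simp: chainp_Cons dsc_arc_def)
    have IH: "cliques I (map snd vs) \<and> chainc I (map snd vs) \<and>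
      run \<delta> (fst (hd vs)) (W (map snd vs)) = cact I \<delta> (fst (last vs)) (snd (last vs)) \<and>
      cact I \<delta> (fst (last vs)) (snd (last vs)) \<noteq> None"
      using Cons False by (simp add: chainp_Cons)
    have "run \<delta> \<alpha> (cw c) = Some \<beta>" using arc cact_cw[OF cs] by simp
    then show ?thesis using IH v vs arc nv by (simp add: run_append chainc_Cons)
  qed
qed

lemma mkpath:
  "cliques I cs \<Longrightarrow> chainc I cs \<Longrightarrow> cs \<noteq> [] \<Longrightarrow> run \<delta> \<alpha> (W cs) \<noteq> None \<Longrightarrow>
   \<exists>vs. vs \<noteq> [] \<and> chainp (dsc_node I \<delta>) (dsc_arc I \<delta>) vs \<and> map snd vs = cs \<and> fst (hd vs) = \<alpha>"
proof (induction cs arbitrary: \<alpha>)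
  case Nil then show ?case by simp
next
  case (Cons c cs)
  obtain \<beta> where \<beta>: "run \<delta> \<alpha> (cw c) = Some \<beta>" "run \<delta> \<beta> (W cs) \<noteq> None"
    using Cons(5) by (auto simp: run_append split: option.splits)
  have nd: "dsc_node I \<delta> (\<alpha>, c)" using \<beta> Cons(2) by (simp add: dsc_node_def cact_cw[OF cs])
  show ?case
  proof (cases "cs = []")
    case True
    then show ?thesis using nd by (intro exI[of _ "[(\<alpha>, c)]"]) simp
  next
    case False
    then obtain vs where vs: "vs \<noteq> []" "chainp (dsc_node I \<delta>) (dsc_arc I \<delta>) vs" "map snd vs = cs" "fst (hd vs) = \<beta>"
      using Cons \<beta> by (auto simp: chainc_Cons)
    have "dsc_node I \<delta> (hd vs)" using vs by (cases vs) (auto simp: chainp_Cons)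
    moreover have "clique_arrow I c (snd (hd vs))" using Cons(3) False vs by (auto simp: chainc_Cons hd_map)
    ultimately have "dsc_arc I \<delta> (\<alpha>, c) (hd vs)" using nd vs(4) \<beta>(1)
      by (cases "hd vs") (simp add: dsc_arc_def cact_cw[OF cs])
    then show ?thesis using vs nd by (intro exI[of _ "(\<alpha>, c) # vs"]) (simp add: chainp_Cons)
  qed
qed

lemma dpath_inj:
  "chainp (dsc_node I \<delta>) (dsc_arc I \<delta>) vs \<Longrightarrow> chainp (dsc_node I \<delta>) (dsc_arc I \<delta>) ws \<Longrightarrow>
   map snd vs = map snd ws \<Longrightarrow> vs \<noteq> [] \<Longrightarrow> fst (hd vs) = fst (hd ws) \<Longrightarrow> vs = ws"
proof (induction vs arbitrary: ws)
  case Nil then show ?case by simp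
next
  case (Cons v vs)
  obtain w ws' where ws: "ws = w # ws'" using Cons(4) by (cases ws) auto
  have vw: "v = w" using Cons(4,6) ws by (simp add: prod_eq_iff)
  show ?case
  proof (cases "vs = []")
    case True then show ?thesis using Cons(4) ws vw by simp
  next
    case False
    then have "ws' \<noteq> []" using Cons(4) ws by auto
    then have "dsc_arc I \<delta> v (hd vs)" "dsc_arc I \<delta> v (hd ws')" using Cons(2,3) ws vw False by (auto simp: chainp_Cons)
    then have "fst (hd vs) = fst (hd ws')" unfolding dsc_arc_def by (auto split: prod.splits)
    then have "vs = ws'" using Cons ws False by (simp add: chainp_Cons)
    then show ?thesis using ws vw by simp
  qed
qed

end

fun expand :: "('s \<times> 'a set) list \<Rightarrow> ('s \<times> 'a set \<times> nat) list" where
  "expand [] = []"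
| "expand ((\<alpha>, c) # vs) = map (\<lambda>i. (\<alpha>, c, i)) [1..<Suc (card c)] @ expand vs"

lemma length_expand: "length (expand vs) = sum_list (map (\<lambda>v. card (snd v)) vs)"
  by (induction vs rule: expand.induct) auto

context
  fixes I :: "'a rel" and \<delta> :: "'a \<Rightarrow> 's \<Rightarrow> 's option"
  assumes cs: "concurrent_system I \<delta>"
begin

definition DD where "DD = {vs. vs \<noteq> [] \<and> chainp (dsc_node I \<delta>) (dsc_arc I \<delta>) vs}"
definition g where "g vs = (fst (hd vs), tclass I (W (map snd vs)))"

lemma g_exec:
  assumes "vs \<in> DD"
  shows "g vs \<in> executions I \<delta> \<and> height I (snd (g vs)) = length vs
    \<and> tlength (snd (g vs)) = sum_list (map (\<lambda>v. card (snd v)) vs)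
    \<and> tact \<delta> (fst (g vs)) (snd (g vs)) = cact I \<delta> (fst (last vs)) (snd (last vs))"
proof -
  have p: "cliques I (map snd vs)" "chainc I (map snd vs)"
    "run \<delta> (fst (hd vs)) (W (map snd vs)) = cact I \<delta> (fst (last vs)) (snd (last vs))"
    "cact I \<delta> (fst (last vs)) (snd (last vs)) \<noteq> None"
    using g_props[OF cs] assms by (auto simp: DD_def)
  have "tlength (snd (g vs)) = sum_list (map (\<lambda>v. card (snd v)) vs)"
    using W_length[OF p(1)] by (simp add: g_def tlength_tclass comp_def)
  moreover have "height I (snd (g vs)) = length vs"
    using height_eq[OF ind[OF cs] p(1,2)] by (simp add: g_def)
  moreover have "tact \<delta> (fst (g vs)) (snd (g vs)) = cact I \<delta> (fst (last vs)) (snd (last vs))"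
    using p(3) by (simp add: g_def tact_tclass[OF cs])
  moreover have "g vs \<in> executions I \<delta>"
    using p(3,4) by (simp add: g_def executions_def traces_def tact_tclass[OF cs])
  ultimately show ?thesis by blast
qed

lemma g_inj: "inj_on g DD"
proof
  fix vs ws assume v: "vs \<in> DD" and w: "ws \<in> DD" and e: "g vs = g ws"
  have pv: "cliques I (map snd vs)" "chainc I (map snd vs)" using g_props[OF cs] v by (auto simp: DD_def)
  have pw: "cliques I (map snd ws)" "chainc I (map snd ws)" using g_props[OF cs] w by (auto simp: DD_def)
  have "teq I (W (map snd vs)) (W (map snd ws))" using e by (simp add: g_def tclass_eq)
  then have "map snd vs = map snd ws" using nf_unique[OF ind[OF cs]] pv pw by blast
  moreover have "fst (hd vs) = fst (hd ws)" using e by (simp add: g_def)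
  ultimately show "vs = ws" using dpath_inj[OF cs] v w by (auto simp: DD_def)
qed

lemma g_surj:
  assumes "w \<noteq> []" "run \<delta> \<alpha> w \<noteq> None"
  shows "\<exists>vs\<in>DD. g vs = (\<alpha>, tclass I w)"
proof -
  obtain cs' where c: "cliques I cs'" "chainc I cs'" "teq I w (W cs')" using nf_exists[OF ind[OF cs]] by blast
  have "cs' \<noteq> []" using assms(1) teq_length[OF c(3)] by auto
  moreover have "run \<delta> \<alpha> (W cs') \<noteq> None" using assms(2) teq_run[OF cs c(3)] by simp
  ultimately obtain vs where vs: "vs \<noteq> []" "chainp (dsc_node I \<delta>) (dsc_arc I \<delta>) vs" "map snd vs = cs'" "fst (hd vs) = \<alpha>"
    using mkpath[OF cs c(1,2)] by blast
  have "g vs = (\<alpha>, tclass I w)" using vs c(3) tclass_eq teq_sym by (metis g_def)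
  then show ?thesis using vs by (auto simp: DD_def)
qed

lemma DD_card: "vs \<in> DD \<Longrightarrow> v \<in> set vs \<Longrightarrow> card (snd v) \<ge> 1"
  using g_props[OF cs, of vs] clique_card by (fastforce simp: DD_def cliques_def)

lemma block_chain:
  assumes "dsc_node I \<delta> (\<alpha>, c)" "1 \<le> j"
  shows "chainp (adsc_node I \<delta>) (adsc_arc I \<delta>) (map (\<lambda>i. (\<alpha>, c, i)) [j..<Suc (card c)])"
  using assms unfolding chainp_iff adsc_arc_def adsc_node_def by (auto simp del: upt_Suc)

lemma expand_chain:
  "vs \<in> DD \<Longrightarrow> chainp (adsc_node I \<delta>) (adsc_arc I \<delta>) (expand vs) \<and> expand vs \<noteq> [] \<and>
     hd (expand vs) = (fst (hd vs), snd (hd vs), 1) \<and>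
     last (expand vs) = (fst (last vs), snd (last vs), card (snd (last vs)))"
proof (induction vs)
  case Nil then show ?case by (simp add: DD_def)
next
  case (Cons v vs)
  obtain \<alpha> c where v: "v = (\<alpha>, c)" by (cases v)
  have nd: "dsc_node I \<delta> (\<alpha>, c)" using Cons(2) v by (simp add: DD_def chainp_Cons)
  have c1: "card c \<ge> 1" using DD_card[OF Cons(2), of v] v by simp
  define B where "B = map (\<lambda>i. (\<alpha>, c, i)) [1..<Suc (card c)]"
  have Bc: "chainp (adsc_node I \<delta>) (adsc_arc I \<delta>) B" using block_chain[OF nd] B_def by simp
  have B1: "B = (\<alpha>, c, 1) # map (\<lambda>i. (\<alpha>, c, i)) [Suc 1..<Suc (card c)]"
    unfolding B_def using c1 by (simp add: upt_conv_Cons del: upt_Suc)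
  have B2: "B = map (\<lambda>i. (\<alpha>, c, i)) [1..<card c] @ [(\<alpha>, c, card c)]"
    unfolding B_def using c1 by simp
  have Bne: "B \<noteq> []" "hd B = (\<alpha>, c, 1)" "last B = (\<alpha>, c, card c)"
    using B1 B2 by (metis list.distinct(1), metis list.sel(1), metis last_snoc)
  have ex: "expand (v # vs) = B @ expand vs" using v B_def by simp
  show ?case
  proof (cases "vs = []")
    case True then show ?thesis using ex Bc Bne v by simp
  next
    case False
    then have vsD: "vs \<in> DD" using Cons(2) by (simp add: DD_def chainp_Cons)
    obtain \<beta> d where hv: "hd vs = (\<beta>, d)" by (cases "hd vs")
    have da: "dsc_arc I \<delta> (\<alpha>, c) (\<beta>, d)" using Cons(2) v hv False by (simp add: DD_def chainp_Cons)
    have "hd vs \<in> set vs" using False by simp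
    then have d1: "card d \<ge> 1" using DD_card[OF vsD, of "hd vs"] hv by simp
    have "adsc_arc I \<delta> (\<alpha>, c, card c) (\<beta>, d, 1)"
      using da c1 d1 unfolding adsc_arc_def adsc_node_def dsc_arc_def by auto
    then show ?thesis using Cons.IH[OF vsD] ex Bc Bne v hv False by (simp add: chainp_append)
  qed
qed

lemma expand_inj:
  "(\<forall>v\<in>set vs. card (snd v) \<ge> 1) \<Longrightarrow> (\<forall>v\<in>set ws. card (snd v) \<ge> 1) \<Longrightarrow> expand vs = expand ws \<Longrightarrow> vs = ws"
proof (induction vs arbitrary: ws)
  case Nil
  then show ?case by (cases ws) (auto simp: upt_conv_Cons)
next
  case (Cons v vs)
  obtain \<alpha> c where v: "v = (\<alpha>, c)" by (cases v)
  have c1: "card c \<ge> 1" using Cons(2) v by auto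
  obtain w ws' where ws: "ws = w # ws'" using Cons(4) v c1 by (cases ws) (auto simp: upt_conv_Cons)
  obtain \<beta> d where w: "w = (\<beta>, d)" by (cases w)
  have d1: "card d \<ge> 1" using Cons(3) ws w by auto
  have "(\<alpha>, c, 1) = (\<beta>, d, 1)" using Cons(4) v ws w c1 d1 by (auto simp del: upt_Suc simp: upt_conv_Cons)
  then have "\<alpha> = \<beta>" "c = d" by auto
  then have "expand vs = expand ws'" using Cons(4) v ws w by simp
  then have "vs = ws'" using Cons ws by simp
  then show ?case using v w ws \<open>\<alpha> = \<beta>\<close> \<open>c = d\<close> by simp
qed

lemma decomp:
  "chainp (adsc_node I \<delta>) (adsc_arc I \<delta>) vs \<Longrightarrow> vs \<noteq> [] \<Longrightarrow> hd vs = (\<alpha>, c, i) \<Longrightarrow>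
   snd (snd (last vs)) = card (fst (snd (last vs))) \<Longrightarrow>
   \<exists>ws. vs = map (\<lambda>j. (\<alpha>, c, j)) [i..<Suc (card c)] @ expand ws \<and> (ws \<noteq> [] \<longrightarrow> ws \<in> DD \<and> dsc_arc I \<delta> (\<alpha>, c) (hd ws))"
proof (induction vs arbitrary: \<alpha> c i)
  case Nil then show ?case by simp
next
  case (Cons v vs)
  have v: "v = (\<alpha>, c, i)" using Cons(4) by simp
  have nv: "dsc_node I \<delta> (\<alpha>, c)" "1 \<le> i" "i \<le> card c" using Cons(2) v by (auto simp: chainp_Cons adsc_node_def)
  show ?case
  proof (cases "vs = []")
    case True
    then have "i = card c" using Cons(5) v by simp
    then show ?thesis using True v by (intro exI[of _ "[]"]) simp
  next
    case False
    obtain \<beta> d j where hv: "hd vs = (\<beta>, d, j)" by (cases "hd vs") auto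
    have ar: "adsc_arc I \<delta> (\<alpha>, c, i) (\<beta>, d, j)" using Cons(2) v hv False by (simp add: chainp_Cons)
    have cv: "chainp (adsc_node I \<delta>) (adsc_arc I \<delta>) vs" using Cons(2) by (simp add: chainp_Cons)
    have lv: "snd (snd (last vs)) = card (fst (snd (last vs)))" using Cons(5) False by simp
    from ar consider (A) "\<beta> = \<alpha>" "d = c" "j = Suc i" | (B) "i = card c" "j = 1" "dsc_arc I \<delta> (\<alpha>, c) (\<beta>, d)"
      unfolding adsc_arc_def by auto
    then show ?thesis
    proof cases
      case A
      then obtain ws where ws: "vs = map (\<lambda>j. (\<alpha>, c, j)) [Suc i..<Suc (card c)] @ expand ws"
        "ws \<noteq> [] \<longrightarrow> ws \<in> DD \<and> dsc_arc I \<delta> (\<alpha>, c) (hd ws)"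
        using Cons.IH[OF cv False _ lv] hv by blast
      have "[i..<Suc (card c)] = i # [Suc i..<Suc (card c)]" using nv by (simp add: upt_conv_Cons)
      then show ?thesis using ws v by (intro exI[of _ ws]) simp
    next
      case B
      then obtain ws where ws: "vs = map (\<lambda>j. (\<beta>, d, j)) [1..<Suc (card d)] @ expand ws"
        "ws \<noteq> [] \<longrightarrow> ws \<in> DD \<and> dsc_arc I \<delta> (\<beta>, d) (hd ws)"
        using Cons.IH[OF cv False _ lv] hv by blast
      have nd: "dsc_node I \<delta> (\<beta>, d)" using B by (simp add: dsc_arc_def)
      have "(\<beta>, d) # ws \<in> DD" using ws nd by (auto simp: DD_def chainp_Cons)
      moreover have "vs = expand ((\<beta>, d) # ws)" using ws by simp
      ultimately show ?thesis using B v by (intro exI[of _ "(\<beta>, d) # ws"]) simp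
    qed
  qed
qed

lemma expand_surj:
  assumes "vs \<in> adsc_full_paths I \<delta> n"
  shows "\<exists>ws\<in>DD. expand ws = vs"
proof -
  have vs: "chainp (adsc_node I \<delta>) (adsc_arc I \<delta>) vs" "vs \<noteq> []" "snd (snd (hd vs)) = 1"
    "snd (snd (last vs)) = card (fst (snd (last vs)))"
    using assms by (auto simp: adsc_full_paths_def paths_iff)
  obtain \<alpha> c where hv: "hd vs = (\<alpha>, c, 1)" using vs(3) by (cases "hd vs") auto
  have nd: "dsc_node I \<delta> (\<alpha>, c)" using vs(1,2) hv by (cases vs) (auto simp: chainp_Cons adsc_node_def)
  obtain ws where ws: "vs = map (\<lambda>j. (\<alpha>, c, j)) [1..<Suc (card c)] @ expand ws"
    "ws \<noteq> [] \<longrightarrow> ws \<in> DD \<and> dsc_arc I \<delta> (\<alpha>, c) (hd ws)"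
    using decomp[OF vs(1,2) hv vs(4)] by blast
  have "(\<alpha>, c) # ws \<in> DD" using ws nd by (auto simp: DD_def chainp_Cons)
  moreover have "expand ((\<alpha>, c) # ws) = vs" using ws by simp
  ultimately show ?thesis by blast
qed

end

context
  fixes I :: "'a rel" and \<delta> :: "'a \<Rightarrow> 's \<Rightarrow> 's option"
  assumes cs: "concurrent_system I \<delta>"
begin

lemma exec_decomp:
  assumes "(\<alpha>, x) \<in> executions I \<delta>"
  obtains w where "x = tclass I w" "run \<delta> \<alpha> w \<noteq> None"
  using assms tact_tclass[OF cs] by (auto simp: executions_def traces_def)

lemma part1:
  assumes "h \<ge> 1"
  shows "\<exists>f. bij_betw f (executions_height I \<delta> h) (dsc_paths I \<delta> h)"
proof -
  have sub: "dsc_paths I \<delta> h \<subseteq> DD I \<delta>" using assms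
    by (auto simp: dsc_paths_def paths_iff DD_def[OF cs])
  have img: "g I ` dsc_paths I \<delta> h = executions_height I \<delta> h"
  proof
    show "g I ` dsc_paths I \<delta> h \<subseteq> executions_height I \<delta> h"
      using g_exec[OF cs] sub by (fastforce simp: executions_height_def dsc_paths_def paths_iff)
  next
    show "executions_height I \<delta> h \<subseteq> g I ` dsc_paths I \<delta> h"
    proof
      fix e assume e: "e \<in> executions_height I \<delta> h"
      obtain \<alpha> x where ax: "e = (\<alpha>, x)" by (cases e)
      have "(\<alpha>, x) \<in> executions I \<delta>" using e ax by (simp add: executions_height_def)
      then obtain w where w: "x = tclass I w" "run \<delta> \<alpha> w \<noteq> None"
        by (rule exec_decomp)
      have "w \<noteq> []"
      proof
        assume "w = []"
        then have "height I x = 0" using height_eq[OF ind[OF cs], of "[]" w] w by simp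
        then show False using e ax assms by (simp add: executions_height_def)
      qed
      then obtain vs where vs: "vs \<in> DD I \<delta>" "g I vs = (\<alpha>, x)" using g_surj[OF cs] w by blast
      have "length vs = h" using g_exec[OF cs vs(1)] vs(2) e ax by (simp add: executions_height_def)
      then have "vs \<in> dsc_paths I \<delta> h" using vs(1) by (simp add: DD_def[OF cs] dsc_paths_def paths_iff)
      then show "e \<in> g I ` dsc_paths I \<delta> h" using vs ax by force
    qed
  qed
  have "bij_betw (g I) (dsc_paths I \<delta> h) (executions_height I \<delta> h)"
    using img inj_on_subset[OF g_inj[OF cs] sub] by (simp add: bij_betw_def)
  then show ?thesis using bij_betw_the_inv_into by blast
qed

definition En where "En n = {vs \<in> DD I \<delta>. sum_list (map (\<lambda>v. card (snd v)) vs) = n}"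

lemma g_bij2:
  assumes "n \<ge> 1"
  shows "bij_betw (g I) (En n) (executions_length I \<delta> n)"
proof -
  have sub: "En n \<subseteq> DD I \<delta>" by (auto simp: En_def)
  have img: "g I ` En n = executions_length I \<delta> n"
  proof
    show "g I ` En n \<subseteq> executions_length I \<delta> n"
      using g_exec[OF cs] sub by (fastforce simp: executions_length_def En_def)
  next
    show "executions_length I \<delta> n \<subseteq> g I ` En n"
    proof
      fix e assume e: "e \<in> executions_length I \<delta> n"
      obtain \<alpha> x where ax: "e = (\<alpha>, x)" by (cases e)
      have "(\<alpha>, x) \<in> executions I \<delta>" using e ax by (simp add: executions_length_def)
      then obtain w where w: "x = tclass I w" "run \<delta> \<alpha> w \<noteq> None"
        by (rule exec_decomp)
      have "w \<noteq> []" using e ax assms w by (auto simp: executions_length_def tlength_tclass)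
      then obtain vs where vs: "vs \<in> DD I \<delta>" "g I vs = (\<alpha>, x)" using g_surj[OF cs] w by blast
      have "vs \<in> En n" using g_exec[OF cs vs(1)] vs e ax by (simp add: executions_length_def En_def)
      then show "e \<in> g I ` En n" using vs ax by force
    qed
  qed
  show ?thesis using img inj_on_subset[OF g_inj[OF cs] sub] by (simp add: bij_betw_def)
qed

lemma DD_cards: "vs \<in> DD I \<delta> \<Longrightarrow> \<forall>v\<in>set vs. card (snd v) \<ge> 1"
  using DD_card[OF cs] by blast

lemma expand_bij:
  "bij_betw expand (En n) (adsc_full_paths I \<delta> n)"
proof -
  have inj: "inj_on expand (En n)"
  proof (rule inj_onI)
    fix x y assume x: "x \<in> En n" and y: "y \<in> En n" and e: "expand x = expand y"
    have "x \<in> DD I \<delta>" "y \<in> DD I \<delta>" using x y by (simp_all add: En_def)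
    then show "x = y" using expand_inj[OF cs _ _ e] DD_cards by blast
  qed
  have img: "expand ` En n = adsc_full_paths I \<delta> n"
  proof
    show "expand ` En n \<subseteq> adsc_full_paths I \<delta> n"
    proof
      fix vs assume "vs \<in> expand ` En n"
      then obtain ws where ws: "ws \<in> En n" "vs = expand ws" by blast
      then have "ws \<in> DD I \<delta>" by (simp add: En_def)
      from expand_chain[OF cs this] ws show "vs \<in> adsc_full_paths I \<delta> n"
        by (simp add: adsc_full_paths_def paths_iff length_expand En_def)
    qed
  next
    show "adsc_full_paths I \<delta> n \<subseteq> expand ` En n"
    proof
      fix vs assume vs: "vs \<in> adsc_full_paths I \<delta> n"
      then obtain ws where ws: "ws \<in> DD I \<delta>" "expand ws = vs" using expand_surj[OF cs] by blast
      have "length vs = n" using vs by (simp add: adsc_full_paths_def paths_iff)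
      then have "sum_list (map (\<lambda>v. card (snd v)) ws) = n" using ws(2) length_expand[of ws] by simp
      then have "ws \<in> En n" using ws(1) by (simp add: En_def)
      then show "vs \<in> expand ` En n" using ws by blast
    qed
  qed
  show ?thesis using inj img by (simp add: bij_betw_def)
qed

lemma part2:
  assumes "n \<ge> 1"
  shows "\<exists>f. bij_betw f (executions_length I \<delta> n) (adsc_full_paths I \<delta> n)"
  using bij_betw_trans[OF bij_betw_the_inv_into[OF g_bij2[OF assms]] expand_bij] by blast

definition Enab where "Enab n \<alpha> \<beta> = {vs \<in> En n. fst (hd vs) = \<alpha> \<and> cact I \<delta> (fst (last vs)) (snd (last vs)) = Some \<beta>}"

lemma part3:
  assumes "n \<ge> 1"
  shows "\<exists>f. bij_betw f (executions_from_to I \<delta> n \<alpha> \<beta>) (adsc_full_paths_from_to I \<delta> n \<alpha> \<beta>)"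
proof -
  let ?X = "executions_from_to I \<delta> n \<alpha> \<beta>"
  have b1: "bij_betw (Pair \<alpha>) ?X (Pair \<alpha> ` ?X)" by (simp add: bij_betw_def inj_on_def)
  have sub: "Enab n \<alpha> \<beta> \<subseteq> En n" by (auto simp: Enab_def)
  have imgg: "g I ` Enab n \<alpha> \<beta> = Pair \<alpha> ` ?X"
  proof
    show "g I ` Enab n \<alpha> \<beta> \<subseteq> Pair \<alpha> ` ?X"
    proof
      fix e assume "e \<in> g I ` Enab n \<alpha> \<beta>"
      then obtain vs where vs: "vs \<in> Enab n \<alpha> \<beta>" "e = g I vs" by blast
      then have vD: "vs \<in> DD I \<delta>" by (simp add: Enab_def En_def)
      have f: "fst (g I vs) = \<alpha>" using vs(1) by (simp add: Enab_def g_def[OF cs])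
      have ge: "g I vs \<in> executions I \<delta>" "tlength (snd (g I vs)) = sum_list (map (\<lambda>v. card (snd v)) vs)"
        "tact \<delta> (fst (g I vs)) (snd (g I vs)) = cact I \<delta> (fst (last vs)) (snd (last vs))"
        using g_exec[OF cs vD] by blast+
      have tr: "snd (g I vs) \<in> traces I" using ge(1) by (cases "g I vs") (simp add: executions_def)
      have "sum_list (map (\<lambda>v. card (snd v)) vs) = n" "cact I \<delta> (fst (last vs)) (snd (last vs)) = Some \<beta>"
        using vs(1) by (simp_all add: Enab_def En_def)
      then have X: "snd (g I vs) \<in> ?X" using ge tr f by (simp add: executions_from_to_def)
      have "e = (\<alpha>, snd (g I vs))" using vs(2) f by (metis prod.collapse)
      then show "e \<in> Pair \<alpha> ` ?X" using X by blast
    qed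
  next
    show "Pair \<alpha> ` ?X \<subseteq> g I ` Enab n \<alpha> \<beta>"
    proof
      fix e assume "e \<in> Pair \<alpha> ` ?X"
      then obtain x where x: "x \<in> ?X" "e = (\<alpha>, x)" by blast
      then have "(\<alpha>, x) \<in> executions_length I \<delta> n"
        by (auto simp: executions_from_to_def executions_length_def executions_def)
      then have "(\<alpha>, x) \<in> g I ` En n" using bij_betw_imp_surj_on[OF g_bij2[OF assms]] by simp
      then obtain vs where vs: "vs \<in> En n" "g I vs = (\<alpha>, x)" by (metis imageE)
      have vD: "vs \<in> DD I \<delta>" using vs by (simp add: En_def)
      have "fst (hd vs) = \<alpha>" using vs(2) by (simp add: g_def[OF cs])
      moreover have "cact I \<delta> (fst (last vs)) (snd (last vs)) = Some \<beta>"
        using g_exec[OF cs vD] vs(2) x by (simp add: executions_from_to_def)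
      ultimately have "vs \<in> Enab n \<alpha> \<beta>" using vs by (simp add: Enab_def)
      then show "e \<in> g I ` Enab n \<alpha> \<beta>" using vs x by force
    qed
  qed
  have b2: "bij_betw (g I) (Enab n \<alpha> \<beta>) (Pair \<alpha> ` ?X)"
    by (rule bij_betw_subset[OF g_bij2[OF assms] sub imgg])
  have imge: "expand ` Enab n \<alpha> \<beta> = adsc_full_paths_from_to I \<delta> n \<alpha> \<beta>"
  proof
    show "expand ` Enab n \<alpha> \<beta> \<subseteq> adsc_full_paths_from_to I \<delta> n \<alpha> \<beta>"
    proof
      fix vs assume "vs \<in> expand ` Enab n \<alpha> \<beta>"
      then obtain ws where ws: "ws \<in> Enab n \<alpha> \<beta>" "vs = expand ws" by blast
      then have "ws \<in> En n" by (simp add: Enab_def)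
      then have "vs \<in> adsc_full_paths I \<delta> n" using ws bij_betw_imp_surj_on[OF expand_bij] by blast
      moreover have "ws \<in> DD I \<delta>" using ws by (simp add: Enab_def En_def)
      ultimately show "vs \<in> adsc_full_paths_from_to I \<delta> n \<alpha> \<beta>"
        using expand_chain[OF cs] ws by (simp add: adsc_full_paths_from_to_def Enab_def)
    qed
  next
    show "adsc_full_paths_from_to I \<delta> n \<alpha> \<beta> \<subseteq> expand ` Enab n \<alpha> \<beta>"
    proof
      fix vs assume vs: "vs \<in> adsc_full_paths_from_to I \<delta> n \<alpha> \<beta>"
      then have "vs \<in> adsc_full_paths I \<delta> n" by (simp add: adsc_full_paths_from_to_def)
      then have "vs \<in> expand ` En n" using bij_betw_imp_surj_on[OF expand_bij] by simp
      then obtain ws where ws: "ws \<in> En n" "expand ws = vs" by (metis imageE)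
      have "ws \<in> DD I \<delta>" using ws by (simp add: En_def)
      then have "ws \<in> Enab n \<alpha> \<beta>" using expand_chain[OF cs] ws vs
        by (auto simp: adsc_full_paths_from_to_def Enab_def)
      then show "vs \<in> expand ` Enab n \<alpha> \<beta>" using ws by blast
    qed
  qed
  have b3: "bij_betw expand (Enab n \<alpha> \<beta>) (adsc_full_paths_from_to I \<delta> n \<alpha> \<beta>)"
    by (rule bij_betw_subset[OF expand_bij sub imge])
  show ?thesis
    using bij_betw_trans[OF bij_betw_trans[OF b1 bij_betw_the_inv_into[OF b2]] b3] by blast
qed

end

theorem proposition4:
  fixes I :: "('a::finite) rel" and \<delta> :: "'a \<Rightarrow> ('s::finite) \<Rightarrow> 's option"
  assumes "concurrent_system I \<delta>"
  shows "(\<forall>h\<ge>1. \<exists>f. bij_betw f (executions_height I \<delta> h) (dsc_paths I \<delta> h))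
       \<and> (\<forall>n\<ge>1. \<exists>f. bij_betw f (executions_length I \<delta> n) (adsc_full_paths I \<delta> n))
       \<and> (\<forall>n\<ge>1. \<forall>\<alpha> \<beta>. \<exists>f. bij_betw f (executions_from_to I \<delta> n \<alpha> \<beta>)
                                      (adsc_full_paths_from_to I \<delta> n \<alpha> \<beta>))"
  using part1[OF assms] part2[OF assms] part3[OF assms] by blast

end
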